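(* Let $G$ be a connected graph with $n$ vertices, $m$ edges, chromatic number $\chi$ and independence number $\theta$. If $0\leq \alpha < 1$, then $$S_{\chi}(A_{\alpha}(G))\geq \frac{2\alpha m}{\theta}.$$
   Context: All graphs are simple and undirected. $A_{\alpha}(G)=\alpha D(G)+(1-\alpha)A(G)$, where $A(G)$ is the adjacency matrix and $D(G)$ the diagonal degree matrix. For a real symmetric matrix $M$ with eigenvalues $\lambda_1(M)\geq\cdots\geq\lambda_n(M)$, $S_k(M)=\sum_{i=1}^k\lambda_i(M)$. The independence number is the maximum size of a set of pairwise non-adjacent vertices. *)

theory Defs
  imports "Jordan_Normal_Form.Char_Poly"
begin

definition simple_graph :: "nat \<Rightarrow> (nat \<Rightarrow> nat \<Rightarrow> bool) \<Rightarrow> bool" where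
  "simple_graph n E \<longleftrightarrow> (\<forall>i j. E i j \<longrightarrow> i < n \<and> j < n) \<and> (\<forall>i j. E i j \<longrightarrow> E j i) \<and> (\<forall>i. \<not> E i i)"

definition graph_connected :: "nat \<Rightarrow> (nat \<Rightarrow> nat \<Rightarrow> bool) \<Rightarrow> bool" where
  "graph_connected n E \<longleftrightarrow> (\<forall>i<n. \<forall>j<n. E\<^sup>*\<^sup>* i j)"

definition num_edges :: "nat \<Rightarrow> (nat \<Rightarrow> nat \<Rightarrow> bool) \<Rightarrow> nat" where
  "num_edges n E = card {{i, j} | i j. i < n \<and> j < n \<and> E i j}"

definition degree :: "nat \<Rightarrow> (nat \<Rightarrow> nat \<Rightarrow> bool) \<Rightarrow> nat \<Rightarrow> nat" where
  "degree n E i = card {j. j < n \<and> E i j}"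

definition adj_matrix :: "nat \<Rightarrow> (nat \<Rightarrow> nat \<Rightarrow> bool) \<Rightarrow> real mat" where
  "adj_matrix n E = mat n n (\<lambda>(i, j). if E i j then 1 else 0)"

definition deg_matrix :: "nat \<Rightarrow> (nat \<Rightarrow> nat \<Rightarrow> bool) \<Rightarrow> real mat" where
  "deg_matrix n E = mat n n (\<lambda>(i, j). if i = j then real (degree n E i) else 0)"

definition A_alpha :: "real \<Rightarrow> nat \<Rightarrow> (nat \<Rightarrow> nat \<Rightarrow> bool) \<Rightarrow> real mat" where
  "A_alpha \<alpha> n E = \<alpha> \<cdot>\<^sub>m deg_matrix n E + (1 - \<alpha>) \<cdot>\<^sub>m adj_matrix n E"

definition proper_colouring :: "nat \<Rightarrow> (nat \<Rightarrow> nat \<Rightarrow> bool) \<Rightarrow> nat \<Rightarrow> (nat \<Rightarrow> nat) \<Rightarrow> bool" where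
  "proper_colouring n E k c \<longleftrightarrow> (\<forall>i<n. c i < k) \<and> (\<forall>i j. E i j \<longrightarrow> c i \<noteq> c j)"

definition chromatic_number :: "nat \<Rightarrow> (nat \<Rightarrow> nat \<Rightarrow> bool) \<Rightarrow> nat" where
  "chromatic_number n E = (LEAST k. \<exists>c. proper_colouring n E k c)"

definition independent_set :: "nat \<Rightarrow> (nat \<Rightarrow> nat \<Rightarrow> bool) \<Rightarrow> nat set \<Rightarrow> bool" where
  "independent_set n E S \<longleftrightarrow> S \<subseteq> {0..<n} \<and> (\<forall>i\<in>S. \<forall>j\<in>S. \<not> E i j)"

definition independence_number :: "nat \<Rightarrow> (nat \<Rightarrow> nat \<Rightarrow> bool) \<Rightarrow> nat" where
  "independence_number n E = Max (card ` {S. independent_set n E S})"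

text \<open>For a real symmetric matrix these are all
  its eigenvalues.\<close>

definition eigenvalues_desc :: "real mat \<Rightarrow> real list" where
  "eigenvalues_desc M = rev (sorted_list_of_multiset (proots (char_poly M)))"

definition S_k :: "nat \<Rightarrow> real mat \<Rightarrow> real" where
  "S_k k M = sum_list (take k (eigenvalues_desc M))"

end

theory Submission imports Defs "Jordan_Normal_Form.Schur_Decomposition" begin

lemma trace_comm:
  fixes X Y :: "'a::comm_ring_1 mat"
  assumes "X \<in> carrier_mat n n" "Y \<in> carrier_mat n n"
  shows "(\<Sum>i<n. (X * Y) $$ (i,i)) = (\<Sum>i<n. (Y * X) $$ (i,i))"
proof -
  have "(\<Sum>i<n. (X * Y) $$ (i,i)) = (\<Sum>i<n. \<Sum>k<n. X $$ (i,k) * Y $$ (k,i))"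
    using assms by (intro sum.cong refl) (auto simp: scalar_prod_def lessThan_atLeast0)
  also have "\<dots> = (\<Sum>k<n. \<Sum>i<n. Y $$ (k,i) * X $$ (i,k))"
    by (subst sum.swap) (simp add: mult.commute)
  also have "\<dots> = (\<Sum>i<n. (Y * X) $$ (i,i))"
    using assms by (intro sum.cong refl) (auto simp: scalar_prod_def lessThan_atLeast0)
  finally show ?thesis .
qed

lemma trace_eigs:
  fixes A :: "real mat"
  assumes A: "A \<in> carrier_mat n n"
    and c: "char_poly A = (\<Prod> e \<leftarrow> es. [:- e, 1:])"
  shows "sum_list es = (\<Sum>i<n. A $$ (i,i))"
proof -
  obtain B P Q where s: "schur_decomposition A es = (B,P,Q)"
    by (cases "schur_decomposition A es") auto
  from schur_decomposition[OF A c s] have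
    w: "similar_mat_wit A B P Q" and d: "diag_mat B = es" by auto
  from w A have dims: "B \<in> carrier_mat n n" "P \<in> carrier_mat n n" "Q \<in> carrier_mat n n"
    and QP: "Q * P = 1\<^sub>m n" and AP: "A = P * B * Q"
    unfolding similar_mat_wit_def Let_def by auto
  have "(\<Sum>i<n. A $$ (i,i)) = (\<Sum>i<n. (P * (B * Q)) $$ (i,i))"
    using AP dims by (simp add: assoc_mult_mat[of P n n B n Q n])
  also have "\<dots> = (\<Sum>i<n. ((B * Q) * P) $$ (i,i))"
    using dims by (intro trace_comm) auto
  also have "(B * Q) * P = B * (Q * P)" using dims by (simp add: assoc_mult_mat[of B n n Q n P n])
  also have "\<dots> = B" using QP dims by simp
  also have "(\<Sum>i<n. B $$ (i,i)) = sum_list es"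
    using d dims unfolding diag_mat_def
    by (auto simp: sum_list_sum_nth lessThan_atLeast0 intro!: sum.cong)
  finally show ?thesis by simp
qed

lemma real_sym_split:
  fixes A :: "real mat"
  assumes A: "A \<in> carrier_mat n n"
    and sym: "\<And>i j. i < n \<Longrightarrow> j < n \<Longrightarrow> A $$ (i,j) = A $$ (j,i)"
  shows "\<exists>rs. char_poly A = (\<Prod> r \<leftarrow> rs. [:- r, 1:]) \<and> length rs = n"
proof -
  define Ac where "Ac = map_mat complex_of_real A"
  have Ac: "Ac \<in> carrier_mat n n" using A by (simp add: Ac_def)
  have cpc: "char_poly Ac = map_poly complex_of_real (char_poly A)"
    unfolding Ac_def by (rule of_real_hom.char_poly_hom[OF A])
  obtain as where as: "char_poly Ac = (\<Prod> a \<leftarrow> as. [:- a, 1:])" and len: "length as = n"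
    using char_poly_factorized[OF Ac] by blast
  have real: "Im a = 0" if a: "a \<in> set as" for a
  proof -
    have "poly (char_poly Ac) a = 0" using a unfolding as
      by (auto simp: poly_prod_list prod_list_zero_iff)
    hence "eigenvalue Ac a" using eigenvalue_root_char_poly[OF Ac] by simp
    then obtain v where ev: "eigenvector Ac v a" unfolding eigenvalue_def by blast
    hence v: "v \<in> carrier_vec n" "v \<noteq> 0\<^sub>v n" and Av: "Ac *\<^sub>v v = a \<cdot>\<^sub>v v"
      using Ac unfolding eigenvector_def by auto
    define q where "q = (\<Sum>i<n. \<Sum>j<n. complex_of_real (A $$ (i,j)) * (cnj (v $ i) * v $ j))"
    define s where "s = (\<Sum>i<n. cnj (v $ i) * v $ i)"
    have "q = (\<Sum>i<n. cnj (v $ i) * (Ac *\<^sub>v v) $ i)"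
      unfolding q_def using v A Ac
      by (auto simp: Ac_def scalar_prod_def lessThan_atLeast0 sum_distrib_left ac_simps intro!: sum.cong)
    also have "\<dots> = a * s" unfolding Av s_def using v
      by (auto simp: sum_distrib_left ac_simps intro!: sum.cong)
    finally have qa: "q = a * s" .
    have "cnj q = (\<Sum>i<n. \<Sum>j<n. complex_of_real (A $$ (i,j)) * (v $ i * cnj (v $ j)))"
      unfolding q_def by (simp add: cnj_sum)
    also have "\<dots> = (\<Sum>j<n. \<Sum>i<n. complex_of_real (A $$ (j,i)) * (cnj (v $ j) * v $ i))"
      by (subst sum.swap) (auto simp: sym ac_simps intro!: sum.cong)
    also have "\<dots> = q" unfolding q_def ..
    finally have "Im q = 0" by (metis complex_cnj_cancel_iff Reals_cnj_iff complex_is_Real_iff)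
    have sreal: "s = complex_of_real (\<Sum>i<n. (cmod (v $ i))^2)"
      unfolding s_def of_real_sum complex_norm_square by (simp add: mult.commute)
    obtain i where i: "i < n" "v $ i \<noteq> 0" using v by (metis carrier_vecD eq_vecI index_zero_vec)
    have "(\<Sum>i<n. (cmod (v $ i))^2) > 0"
      by (rule sum_pos2[of _ i]) (use i in auto)
    hence "Im (a * s) = Im a * (\<Sum>i<n. (cmod (v $ i))^2)" unfolding sreal by simp
    with \<open>Im q = 0\<close> qa \<open>(\<Sum>i<n. (cmod (v $ i))^2) > 0\<close> show "Im a = 0" by simp
  qed
  define rs where "rs = map Re as"
  have asrs: "as = map complex_of_real rs" unfolding rs_def using real
    by (auto simp: map_idI complex_eq_iff intro!: map_idI[symmetric])
  interpret mp: map_poly_inj_comm_ring_hom complex_of_real ..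
  have "map_poly complex_of_real (char_poly A) = map_poly complex_of_real (\<Prod> r \<leftarrow> rs. [:- r, 1:])"
    unfolding cpc[symmetric] as asrs mp.hom_prod_list by (simp add: o_def hom_distribs)
  hence "char_poly A = (\<Prod> r \<leftarrow> rs. [:- r, 1:])"
    using mp.eq_iff by blast
  thus ?thesis using len unfolding rs_def by (intro exI[of _ "map Re as"]) simp
qed

lemma eig_props:
  fixes A :: "real mat"
  assumes A: "A \<in> carrier_mat n n"
    and sym: "\<And>i j. i < n \<Longrightarrow> j < n \<Longrightarrow> A $$ (i,j) = A $$ (j,i)"
  shows "length (eigenvalues_desc A) = n"
    "sum_list (eigenvalues_desc A) = (\<Sum>i<n. A $$ (i,i))"
    "sorted_wrt (\<ge>) (eigenvalues_desc A)"
proof -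
  obtain rs where c: "char_poly A = (\<Prod> r \<leftarrow> rs. [:- r, 1:])" and l: "length rs = n"
    using real_sym_split[OF A sym] by blast
  have "proots (\<Prod> r \<leftarrow> rs. [:- r, 1:]) = mset rs"
  proof (induction rs)
    case (Cons a rs)
    let ?P = "(\<Prod> r \<leftarrow> rs. [:- r, 1:])"
    have nz: "?P \<noteq> 0" by (auto simp: prod_list_zero_iff)
    have "proots ([:- a, 1:] * ?P) = proots [:- a, 1:] + proots ?P"
      by (rule proots_mult) (use nz in auto)
    also have "proots [:- a, 1:] = {#a#}" using proots_linear_factor[of "-a"] by simp
    finally show ?case using Cons by simp
  qed simp
  hence e: "eigenvalues_desc A = rev (sort rs)"
    unfolding eigenvalues_desc_def c by simp
  show "length (eigenvalues_desc A) = n" using l e by simp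
  have "sum_list (sort rs) = sum_list rs"
    by (metis mset_sort sum_mset_sum_list)
  thus "sum_list (eigenvalues_desc A) = (\<Sum>i<n. A $$ (i,i))"
    using e trace_eigs[OF A c] by simp
  show "sorted_wrt (\<ge>) (eigenvalues_desc A)" unfolding e by (simp add: sorted_wrt_rev)
qed

lemma top_avg:
  fixes xs :: "real list"
  assumes "sorted_wrt (\<ge>) xs" "k \<le> length xs"
  shows "real k * sum_list xs \<le> real (length xs) * sum_list (take k xs)"
proof -
  define T where "T = take k xs"
  define D where "D = drop k xs"
  have xs: "xs = T @ D" unfolding T_def D_def by simp
  have lt: "length T = k" using assms(2) unfolding T_def by simp
  have ge: "\<And>x y. x \<in> set T \<Longrightarrow> y \<in> set D \<Longrightarrow> y \<le> x"
    using assms(1) unfolding xs sorted_wrt_append by blast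
  have 1: "sum_list D \<le> real (length D) * x" if "x \<in> set T" for x
  proof -
    have "sum_list D = sum_list (map (\<lambda>y. y) D)" by simp
    also have "\<dots> \<le> sum_list (map (\<lambda>y. x) D)"
      by (rule sum_list_mono) (use ge that in auto)
    also have "\<dots> = real (length D) * x" by (simp add: sum_list_triv)
    finally show ?thesis .
  qed
  have "real (length T) * sum_list D = sum_list (map (\<lambda>x. sum_list D) T)"
    by (simp add: sum_list_triv)
  also have "\<dots> \<le> sum_list (map (\<lambda>x. real (length D) * x) T)"
    by (rule sum_list_mono) (use 1 in auto)
  also have "\<dots> = real (length D) * sum_list T" by (simp add: sum_list_const_mult)
  finally have key: "real (length T) * sum_list D \<le> real (length D) * sum_list T" .
  have "real k * sum_list xs = real k * sum_list T + real k * sum_list D"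
    unfolding xs by (simp add: algebra_simps)
  also have "\<dots> \<le> real k * sum_list T + real (length D) * sum_list T"
    using key lt by simp
  also have "\<dots> = real (length xs) * sum_list (take k xs)"
    unfolding T_def[symmetric] using lt by (simp add: xs algebra_simps)
  finally show ?thesis .
qed

lemma A_alpha_carrier: "A_alpha a n E \<in> carrier_mat n n"
  unfolding A_alpha_def deg_matrix_def adj_matrix_def by auto

lemma A_alpha_index:
  "i < n \<Longrightarrow> j < n \<Longrightarrow> A_alpha a n E $$ (i,j) =
     a * (if i = j then real (degree n E i) else 0) + (1 - a) * (if E i j then 1 else 0)"
  unfolding A_alpha_def deg_matrix_def adj_matrix_def by auto

lemma handshake:
  assumes sg: "simple_graph n E"
  shows "(\<Sum>i<n. degree n E i) = 2 * num_edges n E"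
proof -
  define P where "P = Sigma {..<n} (\<lambda>i. {j. j < n \<and> E i j})"
  define P1 where "P1 = {(i,j). i < n \<and> j < n \<and> E i j \<and> i < j}"
  define P2 where "P2 = {(i,j). i < n \<and> j < n \<and> E i j \<and> j < i}"
  have irr: "\<And>i. \<not> E i i" and symE: "\<And>i j. E i j \<Longrightarrow> E j i"
    using sg unfolding simple_graph_def by auto
  have fin: "finite P1" "finite P2"
    by (rule finite_subset[of _ "{..<n} \<times> {..<n}"], auto simp: P1_def P2_def)+
  have "(\<Sum>i<n. degree n E i) = card P"
    unfolding P_def degree_def by (subst card_SigmaI) auto
  also have "P = P1 \<union> P2"
    unfolding P_def P1_def P2_def by auto (metis irr linorder_neqE_nat)
  also have "card (P1 \<union> P2) = card P1 + card P2"
    by (rule card_Un_disjoint) (use fin in \<open>auto simp: P1_def P2_def\<close>)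
  also have "P2 = prod.swap ` P1"
    unfolding P1_def P2_def using symE by auto
  also have "card (prod.swap ` P1) = card P1"
    by (rule card_image) (auto simp: inj_on_def)
  also have "card P1 = num_edges n E"
  proof -
    have inj: "inj_on (\<lambda>(i,j). {i,j}) P1"
      unfolding inj_on_def P1_def by (auto simp: doubleton_eq_iff)
    have eq: "(\<lambda>(i,j). {i,j}) ` P1 = {{i, j} | i j. i < n \<and> j < n \<and> E i j}"
    proof
      show "(\<lambda>(i,j). {i,j}) ` P1 \<subseteq> {{i, j} | i j. i < n \<and> j < n \<and> E i j}"
        unfolding P1_def by auto
      show "{{i, j} | i j. i < n \<and> j < n \<and> E i j} \<subseteq> (\<lambda>(i,j). {i,j}) ` P1"
      proof
        fix x assume "x \<in> {{i, j} | i j. i < n \<and> j < n \<and> E i j}"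
        then obtain i j where x: "x = {i,j}" "i < n" "j < n" "E i j" by blast
        show "x \<in> (\<lambda>(i,j). {i,j}) ` P1"
        proof (cases "i < j")
          case True thus ?thesis using x unfolding P1_def by force
        next
          case False
          hence "j < i" using x irr by (metis neq_iff)
          hence "(j,i) \<in> P1" using x symE unfolding P1_def by auto
          moreover have "x = (\<lambda>(i,j). {i,j}) (j,i)" using x by auto
          ultimately show ?thesis by blast
        qed
      qed
    qed
    show ?thesis unfolding num_edges_def eq[symmetric] by (rule card_image[OF inj, symmetric])
  qed
  finally show ?thesis by simp
qed

lemma chrom_props:
  assumes sg: "simple_graph n E"
  shows "chromatic_number n E \<le> n" "\<exists>c. proper_colouring n E (chromatic_number n E) c"
proof -
  have ex: "proper_colouring n E n id"
    using sg unfolding simple_graph_def proper_colouring_def by auto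
  show "chromatic_number n E \<le> n" unfolding chromatic_number_def
    by (rule Least_le) (use ex in blast)
  show "\<exists>c. proper_colouring n E (chromatic_number n E) c" unfolding chromatic_number_def
    by (rule LeastI_ex) (use ex in blast)
qed

lemma n_le_chi_theta:
  assumes sg: "simple_graph n E"
  shows "n \<le> chromatic_number n E * independence_number n E"
proof -
  let ?k = "chromatic_number n E"
  obtain c where c: "proper_colouring n E ?k c" using chrom_props[OF sg] by blast
  define V where "V t = {i. i < n \<and> c i = t}" for t
  have finI: "finite {S. independent_set n E S}"
    by (rule finite_subset[of _ "Pow {0..<n}"]) (auto simp: independent_set_def)
  have le: "card S \<le> independence_number n E" if "independent_set n E S" for S
    unfolding independence_number_def by (rule Max_ge) (use finI that in auto)
  have Vi: "independent_set n E (V t)" for t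
    using c unfolding independent_set_def V_def proper_colouring_def by (auto; metis)
  have "{0..<n} = (\<Union>t\<in>{..<?k}. V t)"
    using c unfolding V_def proper_colouring_def by auto
  hence "n = card (\<Union>t\<in>{..<?k}. V t)" by (metis card_atLeastLessThan diff_zero)
  also have "\<dots> \<le> (\<Sum>t\<in>{..<?k}. card (V t))" by (rule card_UN_le) simp
  also have "\<dots> \<le> (\<Sum>t\<in>{..<?k}. independence_number n E)"
    by (rule sum_mono) (use le Vi in auto)
  also have "\<dots> = ?k * independence_number n E" by simp
  finally show ?thesis .
qed

theorem corollary5p3:
  fixes n :: nat and E :: "nat \<Rightarrow> nat \<Rightarrow> bool" and \<alpha> :: real
  assumes "simple_graph n E"
    and "graph_connected n E"
    and "0 \<le> \<alpha>" and "\<alpha> < 1"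
  shows "S_k (chromatic_number n E) (A_alpha \<alpha> n E)
           \<ge> 2 * \<alpha> * real (num_edges n E) / real (independence_number n E)"
proof -
  note sg = assms(1)
  define M where "M = A_alpha \<alpha> n E"
  define L where "L = eigenvalues_desc M"
  define k where "k = chromatic_number n E"
  define th where "th = independence_number n E"
  define m where "m = num_edges n E"
  have symE: "\<And>i j. E i j \<Longrightarrow> E j i" using sg unfolding simple_graph_def by auto
  have Mc: "M \<in> carrier_mat n n" unfolding M_def by (rule A_alpha_carrier)
  have sym: "M $$ (i,j) = M $$ (j,i)" if "i < n" "j < n" for i j
    unfolding M_def using that by (auto simp: A_alpha_index dest: symE)
  note ep = eig_props[OF Mc sym, folded L_def]
  have "(\<Sum>i<n. M $$ (i,i)) = (\<Sum>i<n. \<alpha> * real (degree n E i))"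
    unfolding M_def using sg by (intro sum.cong refl) (simp add: A_alpha_index simple_graph_def)
  also have "\<dots> = \<alpha> * real (\<Sum>i<n. degree n E i)" by (simp add: sum_distrib_left)
  also have "\<dots> = 2 * \<alpha> * real m" unfolding handshake[OF sg] m_def by simp
  finally have sL: "sum_list L = 2 * \<alpha> * real m" using ep(2) by simp
  have kn: "k \<le> n" unfolding k_def by (rule chrom_props[OF sg])
  have ta: "real k * sum_list L \<le> real n * S_k k M"
    unfolding S_k_def L_def[symmetric] using top_avg[OF ep(3)] kn ep(1) by simp
  have X: "0 \<le> 2 * \<alpha> * real m" using assms(3) by simp
  show ?thesis
  proof (cases "n = 0")
    case True
    hence "m = 0" using handshake[OF sg] unfolding m_def by simp
    moreover have "S_k k M = 0" unfolding S_k_def L_def[symmetric] using ep(1) True by simp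
    ultimately show ?thesis unfolding m_def[symmetric] k_def[symmetric] M_def[symmetric] by simp
  next
    case False
    have nk: "real n \<le> real k * real th"
      using n_le_chi_theta[OF sg] unfolding k_def th_def by (metis of_nat_le_iff of_nat_mult)
    hence thp: "real th > 0" using False
      by (metis le_zero_eq linorder_not_le mult_zero_right nat_less_le of_nat_0 of_nat_0_le_iff of_nat_le_0_iff)
    have np: "real n > 0" using False by simp
    have "2 * \<alpha> * real m / real th \<le> 2 * \<alpha> * real m * real k / real n"
    proof -
      have "2 * \<alpha> * real m * real n \<le> 2 * \<alpha> * real m * (real k * real th)"
        by (rule mult_left_mono[OF nk X])
      thus ?thesis using thp np by (simp add: field_simps)
    qed
    also have "\<dots> \<le> S_k k M"
      using ta sL np by (simp add: field_simps)
    finally show ?thesis unfolding m_def k_def th_def M_def .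
  qed
qed

end
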